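(* Fix $s,b\ge1$, let $\{a_i\}$ be the $(s,b)$-Generacci sequence, and for $n,k\ge0$ let $q_{n,k}$ be the number of $m\in[0,a_{nb+1})$ whose legal decomposition has exactly $k$ summands (so $q_{n,0}=1$, $q_{n,1}=nb$, and $q_{n,k}=0$ if $n<s+1$ and $k\ge2$). If $n\ge s+1$ and $k\le\frac{n+s}{s+1}$ then \[q_{n,k}=b\,q_{n-(s+1),k-1}+q_{n-1,k},\] and if $k>\frac{n+s}{s+1}$ then $q_{n,k}=0$. Moreover, with $n_*=\lceil\frac{n+s}{s+1}\rceil$, the generating function $H(x,y)=\sum_{n\ge0}\sum_{k=0}^{n_*}q_{n,k}x^ny^k$ satisfies \[H(x,y)=\frac{1+by(x+x^2+\dots+x^s)}{1-x-byx^{s+1}}.\]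
   Context: Fix integers $s,b\ge1$. For an increasing sequence of positive integers $\{a_i\}_{i\ge1}$ define bins $\mathcal{B}_n=\{a_{b(n-1)+1},\dots,a_{bn}\}$ for $n\ge1$, $\mathcal{B}_j=\emptyset$ for $j\le 0$. A decomposition $m=a_{\ell_1}+\dots+a_{\ell_k}$ with $a_{\ell_1}>\dots>a_{\ell_k}$ is an $(s,b)$-Generacci legal decomposition if $\{a_{\ell_i},a_{\ell_{i+1}}\}\not\subset\mathcal{B}_{j-s}\cup\dots\cup\mathcal{B}_j$ for all $i,j$. The $(s,b)$-Generacci sequence is the increasing sequence in which each $a_i$ is the smallest positive integer with no legal decomposition using $a_1,\dots,a_{i-1}$; every nonnegative integer has a unique legal decomposition ($0$ being the empty sum). *)

theory Defs
  imports Complex_Main "HOL-Computational_Algebra.Polynomial" "HOL-Computational_Algebra.Formal_Power_Series"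
begin

text \<open>Sequences are indexed from 1; the value at index 0 is irrelevant.
  Bin n (n an integer) is the set of values a_(b(n-1)+1), ..., a_(bn) for n >= 1, empty for n <= 0.\<close>
definition gbin :: "nat \<Rightarrow> (nat \<Rightarrow> nat) \<Rightarrow> int \<Rightarrow> nat set" where
  "gbin b a n = (if n \<ge> 1 then a ` {b * (nat n - 1) + 1 .. b * nat n} else {})"

text \<open>A decomposition is given by the finite set L of (positive) indices of its summands;
  it represents sum a L with card L summands.\<close>
definition legal :: "nat \<Rightarrow> nat \<Rightarrow> (nat \<Rightarrow> nat) \<Rightarrow> nat set \<Rightarrow> bool" where
  "legal s b a L \<longleftrightarrow> finite L \<and> L \<subseteq> {1..} \<and>
     (\<forall>i\<in>L. \<forall>j\<in>L. i < j \<and> (\<forall>l\<in>L. \<not> (i < l \<and> l < j)) \<longrightarrow>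
        (\<forall>J::int. \<not> ({a i, a j} \<subseteq> (\<Union>t\<in>{J - int s .. J}. gbin b a t))))"

definition is_generacci :: "nat \<Rightarrow> nat \<Rightarrow> (nat \<Rightarrow> nat) \<Rightarrow> bool" where
  "is_generacci s b a \<longleftrightarrow> strict_mono_on {1..} a \<and>
     (\<forall>i\<ge>1. a i = (LEAST m. m > 0 \<and>
        \<not> (\<exists>L. legal s b a L \<and> L \<subseteq> {1..<i} \<and> sum a L = m)))"

definition qcount :: "nat \<Rightarrow> nat \<Rightarrow> (nat \<Rightarrow> nat) \<Rightarrow> nat \<Rightarrow> int \<Rightarrow> nat" where
  "qcount s b a n k = card {m. m < a (n * b + 1) \<and>
     (\<exists>L. legal s b a L \<and> sum a L = m \<and> int (card L) = k)}"

definition nstar :: "nat \<Rightarrow> nat \<Rightarrow> nat" where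
  "nstar s n = nat \<lceil>real (n + s) / real (s + 1)\<rceil>"

text \<open>H(x,y) as a formal power series in x whose coefficients are polynomials in y.\<close>
definition genH :: "nat \<Rightarrow> nat \<Rightarrow> (nat \<Rightarrow> nat) \<Rightarrow> int poly fps" where
  "genH s b a = Abs_fps (\<lambda>n. \<Sum>k=0..nstar s n. monom (int (qcount s b a n (int k))) k)"

end

theory Submission
  imports Defs
begin

unbundle fps_syntax


definition lg :: "nat \<Rightarrow> nat \<Rightarrow> nat set \<Rightarrow> bool" where
 "lg s b L \<longleftrightarrow> finite L \<and> L \<subseteq> {1..} \<and> (\<forall>i\<in>L. \<forall>j\<in>L. i < j \<longrightarrow> (i-1) div b + s < (j-1) div b)"

lemma div_eq_iff_aux:
  fixes x b T :: nat assumes "b \<ge> 1"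
  shows "x div b = T \<longleftrightarrow> b*T \<le> x \<and> x < b*T + b"
proof
  assume "x div b = T"
  then show "b*T \<le> x \<and> x < b*T + b"
    using assms times_div_less_eq_dividend[of b x] dividend_less_times_div[of b x] by auto
next
  assume "b*T \<le> x \<and> x < b*T + b"
  then show "x div b = T" by (intro div_nat_eqI) auto
qed

lemma mem_gbin:
  assumes b: "b \<ge> 1" and sm: "strict_mono_on {1..} a" and i: "i \<ge> 1"
  shows "a i \<in> gbin b a t \<longleftrightarrow> t \<ge> 1 \<and> int ((i-1) div b) = t - 1"
proof (cases "t \<ge> 1")
  case True
  have inj: "inj_on a {1..}" using sm strict_mono_on_imp_inj_on by blast
  have sub: "{b * (nat t - 1) + 1 .. b * nat t} \<subseteq> {1..}" by auto
  have "a i \<in> gbin b a t \<longleftrightarrow> i \<in> {b * (nat t - 1) + 1 .. b * nat t}"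
    unfolding gbin_def using True inj sub i
    by (auto simp: inj_on_image_mem_iff[OF inj])
  also have "\<dots> \<longleftrightarrow> (i-1) div b = nat t - 1"
  proof -
    obtain T where T: "nat t = Suc T" using True by (metis Suc_pred nat_0_less_mult_iff nat_less_eq_zless nat_one_as_int less_le_trans zero_less_one int_ops(2) order_le_less)
    have e: "b * Suc T = b * T + b" by simp
    have "i \<in> {b * T + 1 .. b * T + b} \<longleftrightarrow> b * T \<le> i - 1 \<and> i - 1 < b * T + b" using i by auto
    then show ?thesis unfolding div_eq_iff_aux[OF b] T e by simp
  qed
  finally show ?thesis using True by auto
next
  case False then show ?thesis by (simp add: gbin_def)
qed


lemma pair_ok:
  assumes b: "b \<ge> 1" and sm: "strict_mono_on {1..} a" and i: "i \<ge> 1" and j: "j \<ge> 1" and ij: "i < j"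
  shows "(\<forall>J::int. \<not> {a i, a j} \<subseteq> (\<Union>t\<in>{J - int s .. J}. gbin b a t)) \<longleftrightarrow> (i-1) div b + s < (j-1) div b"
proof -
  define bi where "bi = (i-1) div b"
  define bj where "bj = (j-1) div b"
  have le: "bi \<le> bj" unfolding bi_def bj_def using ij by (simp add: div_le_mono)
  have key: "{a i, a j} \<subseteq> (\<Union>t\<in>{J - int s .. J}. gbin b a t) \<longleftrightarrow>
     (J - int s \<le> int bi + 1 \<and> int bi + 1 \<le> J \<and> J - int s \<le> int bj + 1 \<and> int bj + 1 \<le> J)" for J
  proof -
    have "{a i, a j} \<subseteq> (\<Union>t\<in>{J - int s .. J}. gbin b a t) \<longleftrightarrow>
       (\<exists>t\<in>{J - int s .. J}. a i \<in> gbin b a t) \<and> (\<exists>t\<in>{J - int s .. J}. a j \<in> gbin b a t)" by auto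
    also have "\<dots> \<longleftrightarrow> int bi + 1 \<in> {J - int s .. J} \<and> int bj + 1 \<in> {J - int s .. J}"
    proof -
      have e1: "(\<exists>t\<in>{J - int s .. J}. a i \<in> gbin b a t) \<longleftrightarrow> int bi + 1 \<in> {J - int s .. J}"
      proof
        assume "\<exists>t\<in>{J - int s .. J}. a i \<in> gbin b a t"
        then show "int bi + 1 \<in> {J - int s .. J}" using mem_gbin[OF b sm i] unfolding bi_def by force
      next
        assume "int bi + 1 \<in> {J - int s .. J}"
        then show "\<exists>t\<in>{J - int s .. J}. a i \<in> gbin b a t" using mem_gbin[OF b sm i] unfolding bi_def
          by (intro bexI[of _ "int bi + 1"]) (auto simp: bi_def)
      qed
      have e2: "(\<exists>t\<in>{J - int s .. J}. a j \<in> gbin b a t) \<longleftrightarrow> int bj + 1 \<in> {J - int s .. J}"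
      proof
        assume "\<exists>t\<in>{J - int s .. J}. a j \<in> gbin b a t"
        then show "int bj + 1 \<in> {J - int s .. J}" using mem_gbin[OF b sm j] unfolding bj_def by force
      next
        assume "int bj + 1 \<in> {J - int s .. J}"
        then show "\<exists>t\<in>{J - int s .. J}. a j \<in> gbin b a t" using mem_gbin[OF b sm j] unfolding bj_def
          by (intro bexI[of _ "int bj + 1"]) (auto simp: bj_def)
      qed
      show ?thesis using e1 e2 by simp
    qed
    finally show ?thesis by auto
  qed
  show ?thesis
  proof
    assume h: "\<forall>J::int. \<not> {a i, a j} \<subseteq> (\<Union>t\<in>{J - int s .. J}. gbin b a t)"
    show "(i-1) div b + s < (j-1) div b"
    proof (rule ccontr)
      assume "\<not> ?thesis"
      then have "bj \<le> bi + s" unfolding bi_def bj_def by simp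
      then have "{a i, a j} \<subseteq> (\<Union>t\<in>{int bj + 1 - int s .. int bj + 1}. gbin b a t)"
        unfolding key using le by simp
      then show False using h by blast
    qed
  next
    assume "(i-1) div b + s < (j-1) div b"
    then have "bi + s < bj" unfolding bi_def bj_def .
    then show "\<forall>J::int. \<not> {a i, a j} \<subseteq> (\<Union>t\<in>{J - int s .. J}. gbin b a t)"
      unfolding key by auto
  qed
qed

lemma legal_iff:
  assumes b: "b \<ge> 1" and sm: "strict_mono_on {1..} a"
  shows "legal s b a L \<longleftrightarrow> lg s b L"
proof
  assume "lg s b L"
  then show "legal s b a L"
    unfolding legal_def lg_def using pair_ok[OF b sm] by (metis atLeast_iff subsetD)
next
  assume h: "legal s b a L"
  then have fin: "finite L" and sub: "L \<subseteq> {1..}" unfolding legal_def by auto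
  have cons: "\<And>i j. i \<in> L \<Longrightarrow> j \<in> L \<Longrightarrow> i < j \<Longrightarrow> (\<forall>l\<in>L. \<not> (i < l \<and> l < j)) \<Longrightarrow> (i-1) div b + s < (j-1) div b"
    using h sub pair_ok[OF b sm] unfolding legal_def by (metis atLeast_iff subsetD)
  have "(i-1) div b + s < (j-1) div b" if "i \<in> L" "j \<in> L" "i < j" for i j
  proof -
    define l where "l = Min {x\<in>L. i < x}"
    have ne: "{x\<in>L. i < x} \<noteq> {}" using that by auto
    have fin2: "finite {x\<in>L. i < x}" using fin by auto
    have lin: "l \<in> L" "i < l" using Min_in[OF fin2 ne] unfolding l_def by auto
    have lj: "l \<le> j" unfolding l_def using that fin2 by (intro Min_le) auto
    have "\<forall>x\<in>L. \<not> (i < x \<and> x < l)" unfolding l_def using fin2 Min_le by (metis (mono_tags, lifting) mem_Collect_eq not_less)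
    then have "(i-1) div b + s < (l-1) div b" using cons[OF that(1) lin(1) lin(2)] by blast
    also have "\<dots> \<le> (j-1) div b" using lj by (simp add: div_le_mono)
    finally show ?thesis .
  qed
  then show "lg s b L" unfolding lg_def using fin sub by blast
qed



definition R :: "nat \<Rightarrow> nat \<Rightarrow> nat \<Rightarrow> nat set set" where
  "R s b i = {L. lg s b L \<and> L \<subseteq> {1..<i}}"

lemma lg_subset: "lg s b L \<Longrightarrow> L' \<subseteq> L \<Longrightarrow> lg s b L'"
  unfolding lg_def by (meson finite_subset subset_iff)

lemma lg_empty[simp]: "lg s b {}" unfolding lg_def by simp

lemma bin_cond:
  assumes b: "b \<ge> 1" and j: "j \<ge> 1"
  shows "(j-1) div b + s < I \<longleftrightarrow> j < Suc (b * (I - s))"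
proof -
  have "(j-1) div b + s < I \<longleftrightarrow> (j-1) div b < I - s" by auto
  also have "\<dots> \<longleftrightarrow> j - 1 < (I - s) * b" using b by (intro div_less_iff_less_mult) auto
  finally show ?thesis using j by (auto simp: mult.commute)
qed

lemma lg_insert_max:
  assumes b: "b \<ge> 1" and i: "i \<ge> 1" and lt: "\<forall>j\<in>L. j < i"
  shows "lg s b (insert i L) \<longleftrightarrow> lg s b L \<and> L \<subseteq> {1..<Suc (b * ((i-1) div b - s))}"
proof
  assume h: "lg s b (insert i L)"
  then have l: "lg s b L" by (rule lg_subset) auto
  have "j < Suc (b * ((i-1) div b - s))" if "j \<in> L" for j
  proof -
    have "j \<ge> 1" using l that unfolding lg_def by auto
    moreover have "(j-1) div b + s < (i-1) div b" using h that lt unfolding lg_def by auto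
    ultimately show ?thesis using bin_cond[OF b] by blast
  qed
  then show "lg s b L \<and> L \<subseteq> {1..<Suc (b * ((i-1) div b - s))}" using l unfolding lg_def by auto
next
  assume h: "lg s b L \<and> L \<subseteq> {1..<Suc (b * ((i-1) div b - s))}"
  have c: "(j-1) div b + s < (i-1) div b" if "j \<in> L" for j
  proof -
    have j: "j \<ge> 1" "j < Suc (b * ((i-1) div b - s))" using h that unfolding lg_def by auto
    show ?thesis using bin_cond[OF b j(1)] j(2) by blast
  qed
  show "lg s b (insert i L)" unfolding lg_def
  proof (intro conjI ballI impI)
    show "finite (insert i L)" using h unfolding lg_def by auto
    show "insert i L \<subseteq> {1..}" using h i unfolding lg_def by auto
  next
    fix x y assume xy: "x \<in> insert i L" "y \<in> insert i L" "x < y"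
    show "(x - 1) div b + s < (y - 1) div b"
    proof (cases "y = i")
      case True then show ?thesis using xy c by auto
    next
      case False
      then have "y \<in> L" using xy by auto
      moreover have "x \<noteq> i" using xy lt \<open>y \<in> L\<close> by auto
      ultimately show ?thesis using xy h unfolding lg_def by auto
    qed
  qed
qed

lemma p_less:
  fixes b i s :: nat
  assumes b: "b \<ge> 1" and i: "i \<ge> 1"
  shows "b * ((i-1) div b - s) < i"
proof -
  have "b * ((i-1) div b - s) \<le> b * ((i-1) div b)" by (rule mult_le_mono2) simp
  also have "\<dots> \<le> i - 1" by simp
  finally show ?thesis using i by linarith
qed

context
  fixes s b :: nat and a :: "nat \<Rightarrow> nat"
  assumes b1: "b \<ge> 1" and gen: "is_generacci s b a"
begin

lemma sm: "strict_mono_on {1..} a" using gen unfolding is_generacci_def by blast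

lemma a_eq:
  assumes "i \<ge> 1"
  shows "a i = (LEAST m. m > 0 \<and> \<not> (m \<in> sum a ` R s b i))"
proof -
  have 1: "a i = (LEAST m. m > 0 \<and> \<not> (\<exists>L. legal s b a L \<and> L \<subseteq> {1..<i} \<and> sum a L = m))"
    using gen assms unfolding is_generacci_def by blast
  have 2: "(\<exists>L. legal s b a L \<and> L \<subseteq> {1..<i} \<and> sum a L = m) \<longleftrightarrow> m \<in> sum a ` R s b i" for m
    unfolding legal_iff[OF b1 sm] R_def image_iff by blast
  show ?thesis unfolding 1 2 ..
qed

lemma R_split:
  assumes i: "i \<ge> 1"
  shows "R s b (Suc i) = R s b i \<union> insert i ` R s b (Suc (b * ((i-1) div b - s)))"
proof -
  let ?p = "b * ((i-1) div b - s)"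
  have pl: "?p < i" using p_less[OF b1 i] .
  show ?thesis
  proof (rule set_eqI, rule iffI)
    fix L assume L: "L \<in> R s b (Suc i)"
    show "L \<in> R s b i \<union> insert i ` R s b (Suc ?p)"
    proof (cases "i \<in> L")
      case False
      have "L \<subseteq> {1..<Suc i}" "lg s b L" using L unfolding R_def by auto
      then have "L \<subseteq> {1..<i}" using False by (auto simp: subset_iff less_Suc_eq)
      then show ?thesis using \<open>lg s b L\<close> unfolding R_def by auto
    next
      case True
      define L' where "L' = L - {i}"
      have ins: "L = insert i L'" using True L'_def by auto
      have lt: "\<forall>j\<in>L'. j < i" using L unfolding R_def L'_def by auto
      have "lg s b (insert i L')" using L ins unfolding R_def by auto
      then have "L' \<in> R s b (Suc ?p)" using lg_insert_max[OF b1 i lt] unfolding R_def by auto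
      then show ?thesis using ins by auto
    qed
  next
    fix L assume L: "L \<in> R s b i \<union> insert i ` R s b (Suc ?p)"
    show "L \<in> R s b (Suc i)"
    proof (cases "L \<in> R s b i")
      case True then show ?thesis unfolding R_def by auto
    next
      case False
      then obtain L' where L': "L = insert i L'" "L' \<in> R s b (Suc ?p)" using L by auto
      have lt: "\<forall>j\<in>L'. j < i" using L'(2) pl unfolding R_def by auto
      have "lg s b L" using L' lg_insert_max[OF b1 i lt] unfolding R_def by auto
      moreover have "L \<subseteq> {1..<Suc i}"
      proof
        fix x assume "x \<in> L"
        then have "x = i \<or> x \<in> L'" using L' by auto
        moreover have "L' \<subseteq> {1..}" using L'(2) unfolding R_def lg_def by auto
        ultimately show "x \<in> {1..<Suc i}" using lt i by auto
      qed
      ultimately show ?thesis unfolding R_def by auto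
    qed
  qed
qed

lemma P: "i \<ge> 1 \<Longrightarrow> inj_on (sum a) (R s b i) \<and> sum a ` R s b i = {0..<a i}"
proof (induction i rule: less_induct)
  case (less i)
  show ?case
  proof (cases "i = 1")
    case True
    have R1: "R s b 1 = {{}}" unfolding R_def by auto
    have "a 1 = (LEAST m. m > (0::nat) \<and> \<not> m \<in> {0})" using a_eq[of 1] R1 by simp
    also have "\<dots> = 1" by (rule Least_equality) auto
    finally show ?thesis using True R1 by auto
  next
    case False
    then obtain i' where i: "i = Suc i'" "i' \<ge> 1" using less.prems by (cases i) auto
    define p where "p = b * ((i'-1) div b - s)"
    have pl: "p < i'" using p_less[OF b1 i(2)] unfolding p_def .
    have IH1: "inj_on (sum a) (R s b i') \<and> sum a ` R s b i' = {0..<a i'}"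
      using less.IH[of i'] i by auto
    have IH2: "inj_on (sum a) (R s b (Suc p)) \<and> sum a ` R s b (Suc p) = {0..<a (Suc p)}"
      using less.IH[of "Suc p"] i pl by auto
    have split: "R s b i = R s b i' \<union> insert i' ` R s b (Suc p)"
      using R_split[OF i(2)] i unfolding p_def by simp
    have nin: "i' \<notin> L" "finite L" if "L \<in> R s b (Suc p)" for L
      using that pl unfolding R_def lg_def by auto
    have sums: "sum a (insert i' L) = a i' + sum a L" if "L \<in> R s b (Suc p)" for L
      using nin[OF that] by simp
    have img2: "sum a ` (insert i' ` R s b (Suc p)) = {a i'..<a i' + a (Suc p)}"
    proof -
      have "sum a ` (insert i' ` R s b (Suc p)) = (\<lambda>L. a i' + sum a L) ` R s b (Suc p)"
        unfolding image_image using sums by (intro image_cong) auto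
      also have "\<dots> = plus (a i') ` (sum a ` R s b (Suc p))" by (simp add: image_image)
      also have "\<dots> = {a i'..<a i' + a (Suc p)}" using IH2 by (simp add: add.commute)
      finally show ?thesis .
    qed
    have img: "sum a ` R s b i = {0..<a i' + a (Suc p)}"
      unfolding split image_Un img2 using IH1 ivl_disj_un_two(3)[of 0 "a i'" "a i' + a (Suc p)"] by simp
    have inj: "inj_on (sum a) (R s b i)"
    proof (rule inj_onI)
      fix L1 L2 assume L1: "L1 \<in> R s b i" and L2: "L2 \<in> R s b i" and eq: "sum a L1 = sum a L2"
      have lo: "sum a L < a i'" if "L \<in> R s b i'" for L using IH1 that by auto
      have hi: "sum a L \<ge> a i'" if "L \<in> insert i' ` R s b (Suc p)" for L
        using that sums by (auto simp: image_iff)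
      show "L1 = L2"
      proof (cases "L1 \<in> R s b i'"; cases "L2 \<in> R s b i'")
        assume "L1 \<in> R s b i'" "L2 \<in> R s b i'"
        then show ?thesis using inj_onD[OF conjunct1[OF IH1] eq] by blast
      next
        assume "L1 \<in> R s b i'" "L2 \<notin> R s b i'"
        moreover have "L2 \<in> insert i' ` R s b (Suc p)" using L2 split \<open>L2 \<notin> R s b i'\<close> by blast
        ultimately show ?thesis using lo[of L1] hi[of L2] eq by simp
      next
        assume "L1 \<notin> R s b i'" "L2 \<in> R s b i'"
        moreover have "L1 \<in> insert i' ` R s b (Suc p)" using L1 split \<open>L1 \<notin> R s b i'\<close> by blast
        ultimately show ?thesis using lo[of L2] hi[of L1] eq by simp
      next
        assume "L1 \<notin> R s b i'" "L2 \<notin> R s b i'"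
        then obtain M1 M2 where M: "L1 = insert i' M1" "M1 \<in> R s b (Suc p)"
          "L2 = insert i' M2" "M2 \<in> R s b (Suc p)" using L1 L2 split by auto
        then have "sum a M1 = sum a M2" using eq sums by auto
        then have "M1 = M2" using inj_onD[OF conjunct1[OF IH2]] M by blast
        then show ?thesis using M by simp
      qed
    qed
    have pos: "a (Suc p) > 0"
    proof -
      have "{} \<in> R s b (Suc p)" unfolding R_def by auto
      then have "0 \<in> sum a ` R s b (Suc p)" by force
      then show ?thesis using IH2 by auto
    qed
    have "a i = (LEAST m. m > 0 \<and> \<not> m \<in> {0..<a i' + a (Suc p)})"
      using a_eq[of i] img i by simp
    also have "\<dots> = a i' + a (Suc p)" by (rule Least_equality) (use pos in auto)
    finally show ?thesis using inj img by simp
  qed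
qed

end


definition Cn :: "nat \<Rightarrow> nat \<Rightarrow> nat \<Rightarrow> nat \<Rightarrow> nat" where
  "Cn s b n k = card {L. lg s b L \<and> L \<subseteq> {1..n*b} \<and> card L = k}"

lemma C_zero: "Cn s b n 0 = 1"
proof -
  have "{L. lg s b L \<and> L \<subseteq> {1..n*b} \<and> card L = 0} = {{}}"
    unfolding lg_def by auto
  then show ?thesis unfolding Cn_def by simp
qed

lemma C_0_Suc: "Cn s b 0 (Suc k) = 0"
proof -
  have "{L. lg s b L \<and> L \<subseteq> {1..0*b} \<and> card L = Suc k} = {}" by auto
  then show ?thesis unfolding Cn_def by simp
qed

lemma last_bin:
  fixes b n i :: nat
  assumes b: "b \<ge> 1" and n: "n \<ge> 1" and i: "i \<in> {(n-1)*b+1..n*b}"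
  shows "(i-1) div b = n-1"
proof -
  have e: "n*b = (n-1)*b + b" using n by (cases n) auto
  show ?thesis unfolding div_eq_iff_aux[OF b] using i e by (auto simp: mult.commute)
qed

lemma C_rec:
  fixes b n s k :: nat
  assumes b: "b \<ge> 1" and n: "n \<ge> 1"
  shows "Cn s b n (Suc k) = Cn s b (n-1) (Suc k) + b * Cn s b (n-1-s) k"
proof -
  define S where "S = {L. lg s b L \<and> L \<subseteq> {1..n*b} \<and> card L = Suc k}"
  define A where "A = {L. lg s b L \<and> L \<subseteq> {1..(n-1)*b} \<and> card L = Suc k}"
  define T where "T = {L. lg s b L \<and> L \<subseteq> {1..(n-1-s)*b} \<and> card L = k}"
  define I where "I = {(n-1)*b+1..n*b}"
  define f where "f = (\<lambda>(i::nat, L::nat set). insert i L)"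
  have e: "n*b = (n-1)*b + b" using n by (cases n) auto
  have le1: "(n-1-s)*b \<le> (n-1)*b" by (rule mult_le_mono1) simp
  have le2: "(n-1)*b \<le> n*b" using e by simp
  have pI: "b * ((i-1) div b - s) = (n-1-s)*b" if "i \<in> I" for i
    using last_bin[OF b n that[unfolded I_def]] by (simp add: mult.commute)
  have ltI: "\<forall>j\<in>L'. j < i" if "i \<in> I" "L' \<in> T" for i L'
  proof
    fix j assume "j \<in> L'"
    then have "j \<le> (n-1-s)*b" using that(2) unfolding T_def by auto
    then have "j \<le> (n-1)*b" using le1 by (rule order.trans)
    moreover have "(n-1)*b + 1 \<le> i" using that(1) unfolding I_def by auto
    ultimately show "j < i" by linarith
  qed
  have setI: "{1..<Suc (b * ((i-1) div b - s))} = {1..(n-1-s)*b}" if "i \<in> I" for i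
    by (simp only: pI[OF that] atLeastLessThanSuc_atLeastAtMost)
  have iI1: "i \<ge> 1" if "i \<in> I" for i using that unfolding I_def by auto
  have finT: "finite T" unfolding T_def by (rule finite_subset[of _ "Pow {1..(n-1-s)*b}"]) auto
  have finA: "finite A" unfolding A_def by (rule finite_subset[of _ "Pow {1..(n-1)*b}"]) auto
  have finI: "finite I" unfolding I_def by simp
  have cardI: "card I = b" unfolding I_def using e by simp
  have split: "S = A \<union> f ` (I \<times> T)"
  proof (rule set_eqI, rule iffI)
    fix L assume L: "L \<in> S"
    show "L \<in> A \<union> f ` (I \<times> T)"
    proof (cases "L \<subseteq> {1..(n-1)*b}")
      case True then show ?thesis using L unfolding S_def A_def by auto
    next
      case False
      have fin: "finite L" and sub: "L \<subseteq> {1..n*b}" and lgL: "lg s b L" and cL: "card L = Suc k"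
        using L unfolding S_def lg_def by auto
      have ne: "L \<noteq> {}" using cL by auto
      define i where "i = Max L"
      have iL: "i \<in> L" unfolding i_def using fin ne by simp
      obtain x where x: "x \<in> L" "x \<notin> {1..(n-1)*b}" using False by blast
      have "x \<le> i" unfolding i_def using fin x by simp
      moreover have "x \<ge> 1" using x sub by auto
      ultimately have "i > (n-1)*b" using x by auto
      then have iI: "i \<in> I" using iL sub unfolding I_def by auto
      define L' where "L' = L - {i}"
      have ins: "L = insert i L'" unfolding L'_def using iL by auto
      have lt: "\<forall>j\<in>L'. j < i" unfolding L'_def i_def using fin Max_ge[OF fin] by (auto simp: le_neq_implies_less)
      have "lg s b L' \<and> L' \<subseteq> {1..<Suc (b * ((i-1) div b - s))}"
        using lg_insert_max[OF b iI1[OF iI] lt] lgL ins by simp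
      then have "lg s b L' \<and> L' \<subseteq> {1..(n-1-s)*b}" unfolding setI[OF iI] .
      moreover have "card L' = k" unfolding L'_def using cL iL fin by simp
      ultimately have "L' \<in> T" unfolding T_def by auto
      then have "L \<in> f ` (I \<times> T)" unfolding f_def using ins iI by force
      then show ?thesis by simp
    qed
  next
    fix L assume L: "L \<in> A \<union> f ` (I \<times> T)"
    show "L \<in> S"
    proof (cases "L \<in> A")
      case True
      have "{1..(n-1)*b} \<subseteq> {1..n*b}" using le2 by auto
      then show ?thesis using True unfolding A_def S_def by blast
    next
      case False
      then obtain i L' where iL: "i \<in> I" "L' \<in> T" "L = insert i L'" using L unfolding f_def by auto
      have lt: "\<forall>j\<in>L'. j < i" using ltI iL by auto
      have lgL': "lg s b L'" "L' \<subseteq> {1..(n-1-s)*b}" "card L' = k" using iL unfolding T_def by auto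
      have "lg s b L" using lg_insert_max[OF b iI1[OF iL(1)] lt, where s=s] lgL' iL(3)
        unfolding setI[OF iL(1)] by simp
      moreover have "L \<subseteq> {1..n*b}"
      proof -
        have "{1..(n-1-s)*b} \<subseteq> {1..n*b}" using le1 le2 by auto
        moreover have "i \<in> {1..n*b}" using iL(1) unfolding I_def by auto
        ultimately show ?thesis using lgL'(2) iL(3) by blast
      qed
      moreover have "card L = Suc k" using lgL' lt iL(3) unfolding lg_def by auto
      ultimately show ?thesis unfolding S_def by auto
    qed
  qed
  have disj: "A \<inter> f ` (I \<times> T) = {}"
  proof -
    have "\<not> L \<subseteq> {1..(n-1)*b}" if "L \<in> f ` (I \<times> T)" for L
      using that unfolding f_def I_def by auto
    then show ?thesis unfolding A_def by auto
  qed
  have inj: "inj_on f (I \<times> T)"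
  proof (rule inj_onI)
    fix x y assume x: "x \<in> I \<times> T" and y: "y \<in> I \<times> T" and eq: "f x = f y"
    obtain i L' where xi: "x = (i, L')" by (cases x)
    obtain j M' where yj: "y = (j, M')" by (cases y)
    have lt1: "\<forall>l\<in>L'. l < i" using ltI x xi by auto
    have lt2: "\<forall>l\<in>M'. l < j" using ltI y yj by auto
    have eq': "insert i L' = insert j M'" using eq xi yj unfolding f_def by simp
    have "i = j"
    proof (rule ccontr)
      assume "i \<noteq> j"
      then have "i \<in> M'" "j \<in> L'" using eq' by (auto simp: insert_eq_iff)
      then show False using lt1 lt2 by fastforce
    qed
    moreover have "L' = M'"
    proof -
      have "L' = insert i L' - {i}" using lt1 by auto
      also have "\<dots> = insert j M' - {j}" using eq' \<open>i = j\<close> by simp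
      also have "\<dots> = M'" using lt2 by auto
      finally show ?thesis .
    qed
    ultimately show "x = y" using xi yj by simp
  qed
  have "card S = card A + card (f ` (I \<times> T))"
    unfolding split using finA finI finT disj by (intro card_Un_disjoint) auto
  also have "card (f ` (I \<times> T)) = b * card T"
    using card_image[OF inj] cardI by (simp add: card_cartesian_product)
  finally show ?thesis unfolding Cn_def S_def A_def T_def by simp
qed

lemma C_vanish:
  fixes b n s k :: nat
  assumes b: "b \<ge> 1"
  shows "k * (s+1) > n + s \<Longrightarrow> Cn s b n k = 0"
proof (induction n arbitrary: k rule: less_induct)
  case (less n)
  show ?case
  proof (cases k)
    case 0 then show ?thesis using less.prems by simp
  next
    case (Suc k')
    show ?thesis
    proof (cases "n = 0")
      case True then show ?thesis using Suc C_0_Suc by simp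
    next
      case False
      then have n1: "n \<ge> 1" by simp
      have t1: "Cn s b (n-1) (Suc k') = 0" using less.IH[of "n-1" "Suc k'"] less.prems Suc n1 by simp
      have t2: "Cn s b (n-1-s) k' = 0"
      proof (cases k')
        case 0
        then show ?thesis using less.prems Suc n1 by simp
      next
        case (Suc k'')
        show ?thesis
        proof (cases "n - 1 - s = 0")
          case True then show ?thesis using Suc C_0_Suc by simp
        next
          case False
          have "k' * (s+1) > (n-1-s) + s" using less.prems \<open>k = Suc k'\<close> False by simp
          then show ?thesis using less.IH[of "n-1-s" k'] False by simp
        qed
      qed
      show ?thesis using C_rec[OF b n1, of s k'] t1 t2 Suc by simp
    qed
  qed
qed

context
  fixes s b :: nat and a :: "nat \<Rightarrow> nat"
  assumes b1: "b \<ge> 1" and gen: "is_generacci s b a"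
begin

lemma q_eq:
  assumes k: "k \<ge> 0"
  shows "qcount s b a n k = Cn s b n (nat k)"
proof -
  define Q where "Q = {L. lg s b L \<and> L \<subseteq> {1..n*b} \<and> card L = nat k}"
  have PP: "inj_on (sum a) (R s b (n*b+1)) \<and> sum a ` R s b (n*b+1) = {0..<a (n*b+1)}"
    using P[OF b1 gen, of "n*b+1"] by simp
  have QR: "Q \<subseteq> R s b (n*b+1)" unfolding Q_def R_def by auto
  have smono: "strict_mono_on {1..} a" using sm[OF b1 gen] .
  have "{m. m < a (n * b + 1) \<and> (\<exists>L. legal s b a L \<and> sum a L = m \<and> int (card L) = k)} = sum a ` Q"
  proof (rule set_eqI, rule iffI)
    fix m assume "m \<in> {m. m < a (n * b + 1) \<and> (\<exists>L. legal s b a L \<and> sum a L = m \<and> int (card L) = k)}"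
    then obtain L where m: "m < a (n*b+1)" and L: "lg s b L" "sum a L = m" "int (card L) = k"
      using legal_iff[OF b1 smono] by auto
    have fin: "finite L" and ge1: "L \<subseteq> {1..}" using L unfolding lg_def by auto
    have "L \<subseteq> {1..n*b}"
    proof
      fix j assume j: "j \<in> L"
      show "j \<in> {1..n*b}"
      proof (rule ccontr)
        assume "j \<notin> {1..n*b}"
        then have jg: "j \<ge> n*b+1" using j ge1 by auto
        have "a (n*b+1) \<le> a j" using strict_mono_on_leD[OF smono] jg by auto
        also have "a j \<le> sum a L" using member_le_sum[of j L a] j fin by simp
        finally show False using m L by simp
      qed
    qed
    then show "m \<in> sum a ` Q" unfolding Q_def using L by force
  next
    fix m assume "m \<in> sum a ` Q"
    then obtain L where L: "L \<in> Q" "m = sum a L" by auto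
    have "L \<in> R s b (n*b+1)" using QR L by auto
    then have "sum a L \<in> {0..<a (n*b+1)}" using PP by blast
    then have "m < a (n*b+1)" using L by simp
    moreover have "legal s b a L" using L legal_iff[OF b1 smono] unfolding Q_def by auto
    moreover have "int (card L) = k" using L k unfolding Q_def by auto
    ultimately show "m \<in> {m. m < a (n * b + 1) \<and> (\<exists>L. legal s b a L \<and> sum a L = m \<and> int (card L) = k)}"
      using L by auto
  qed
  then have "qcount s b a n k = card (sum a ` Q)" unfolding qcount_def by simp
  also have "\<dots> = card Q" using PP QR by (intro card_image) (auto intro: inj_on_subset)
  finally show ?thesis unfolding Q_def Cn_def .
qed

lemma q_neg: "k < 0 \<Longrightarrow> qcount s b a n k = 0"
  unfolding qcount_def by auto

end


lemma gt_nstar: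
  fixes k n s :: nat
  assumes "k > nstar s n"
  shows "k * (s+1) > n + s"
proof -
  define x where "x = real (n+s) / real (s+1)"
  have x0: "x \<ge> 0" unfolding x_def by simp
  have "real k \<ge> real (nstar s n) + 1" using assms by simp
  moreover have "real (nstar s n) = of_int \<lceil>x\<rceil>" unfolding nstar_def x_def using x0
    by (simp add: x_def)
  moreover have "of_int \<lceil>x\<rceil> \<ge> x" by (rule le_of_int_ceiling)
  ultimately have "real k > x" by linarith
  then have "real (n+s) < real k * real (s+1)" unfolding x_def
    using pos_divide_less_eq[of "real (s+1)" "real (n+s)" "real k"] by simp
  then have "real (k * (s+1)) > real (n+s)" by (simp only: of_nat_mult)
  then show ?thesis by (simp only: of_nat_less_iff)
qed

lemma c_mult: "(of_nat b * [:0, 1:]) * (p :: int poly) = smult (of_nat b) (pCons 0 p)"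
  by (simp add: of_nat_poly)

context
  fixes s b :: nat and a :: "nat \<Rightarrow> nat"
  assumes b1: "b \<ge> 1" and gen: "is_generacci s b a"
begin

unbundle fps_syntax

lemma coeff_H: "coeff (genH s b a $ n) k = int (Cn s b n k)"
proof -
  have "coeff (genH s b a $ n) k = (\<Sum>j=0..nstar s n. if j = k then int (qcount s b a n (int j)) else 0)"
    unfolding genH_def by (simp add: coeff_sum)
  also have "\<dots> = (if k \<in> {0..nstar s n} then int (qcount s b a n (int k)) else 0)"
    by (simp add: sum.delta)
  also have "\<dots> = int (Cn s b n k)"
  proof (cases "k \<le> nstar s n")
    case True then show ?thesis using q_eq[OF b1 gen, of "int k" n] by simp
  next
    case False
    then have "Cn s b n k = 0" using C_vanish[OF b1] gt_nstar[of s n k] by simp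
    then show ?thesis using False by simp
  qed
  finally show ?thesis .
qed

lemma H0: "genH s b a $ 0 = 1"
proof (rule poly_eqI)
  fix k show "coeff (genH s b a $ 0) k = coeff 1 k"
    by (cases k) (simp_all add: coeff_H C_zero C_0_Suc)
qed

lemma Hrec: "n \<ge> 1 \<Longrightarrow> genH s b a $ n = genH s b a $ (n-1) + (of_nat b * [:0, 1:]) * genH s b a $ (n-1-s)"
proof (rule poly_eqI)
  fix k assume n: "n \<ge> 1"
  show "coeff (genH s b a $ n) k = coeff (genH s b a $ (n-1) + (of_nat b * [:0, 1:]) * genH s b a $ (n-1-s)) k"
  proof (cases k)
    case 0 then show ?thesis by (simp add: c_mult coeff_H C_zero)
  next
    case (Suc k') then show ?thesis using C_rec[OF b1 n, of s k'] by (simp add: c_mult coeff_H of_nat_poly)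
  qed
qed

end

theorem propositionA1:
  fixes s b :: nat and a :: "nat \<Rightarrow> nat"
  assumes "s \<ge> 1" and "b \<ge> 1" and "is_generacci s b a"
  shows "(\<forall>n k. n \<ge> s + 1 \<and> 0 \<le> k \<and> real_of_int k \<le> real (n + s) / real (s + 1) \<longrightarrow>
            qcount s b a n k = b * qcount s b a (n - (s + 1)) (k - 1) + qcount s b a (n - 1) k)
       \<and> (\<forall>n k. real_of_int k > real (n + s) / real (s + 1) \<longrightarrow> qcount s b a n k = 0)
       \<and> genH s b a * (1 - fps_X - fps_const (of_nat b * [:0, 1:]) * fps_X ^ (s + 1))
           = 1 + fps_const (of_nat b * [:0, 1:]) * (\<Sum>i=1..s. fps_X ^ i)"
proof (intro conjI allI impI)
  note b1 = assms(2) and gen = assms(3)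
  fix n :: nat and k :: int
  assume h: "s + 1 \<le> n \<and> 0 \<le> k \<and> real_of_int k \<le> real (n + s) / real (s + 1)"
  then have n1: "n \<ge> 1" by simp
  show "qcount s b a n k = b * qcount s b a (n - (s + 1)) (k - 1) + qcount s b a (n - 1) k"
  proof (cases "k = 0")
    case True
    then show ?thesis using q_eq[OF b1 gen] q_neg[OF b1 gen] by (simp add: C_zero)
  next
    case False
    then obtain k' where k': "k = int (Suc k')" using h by (metis int_ops(1) nat_0_le not0_implies_Suc zero_less_imp_eq_int order_le_less)
    have nk: "nat k = Suc k'" unfolding k' by (rule nat_int)
    have nk1: "nat (k-1) = k'" using k' by simp
    have k0: "k \<ge> 0" "k - 1 \<ge> 0" using k' by auto
    have "qcount s b a n k = Cn s b n (Suc k')" using q_eq[OF b1 gen k0(1), of n] unfolding nk .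
    moreover have "qcount s b a (n - 1) k = Cn s b (n-1) (Suc k')" using q_eq[OF b1 gen k0(1), of "n-1"] unfolding nk .
    moreover have "qcount s b a (n - (s+1)) (k-1) = Cn s b (n-1-s) k'" using q_eq[OF b1 gen k0(2), of "n-(s+1)"] unfolding nk1 by simp
    ultimately show ?thesis using C_rec[OF b1 n1, of s k'] by simp
  qed
next
  note b1 = assms(2) and gen = assms(3)
  fix n :: nat and k :: int
  assume h: "real (n + s) / real (s + 1) < real_of_int k"
  then have "real (n + s) < real_of_int k * real (s+1)" by (simp add: field_simps)
  then have hk: "int (n + s) < k * int (s+1)"
    by (metis of_int_less_iff of_int_mult of_int_of_nat_eq)
  then have "0 < k * int (s+1)" by linarith
  then have "k > 0" by (simp add: zero_less_mult_iff)
  then have kpos: "k \<ge> 0" by simp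
  have "nat k * (s+1) > n + s" using hk kpos
    by (metis nat_int nat_mult_distrib nat_less_eq_zless of_nat_0_le_iff nat_int)
  then show "qcount s b a n k = 0" using q_eq[OF b1 gen kpos] C_vanish[OF b1] by simp
next
  note b1 = assms(2) and gen = assms(3)
  define c :: "int poly" where "c = of_nat b * [:0, 1:]"
  define H where "H = genH s b a"
  have e: "H * (1 - fps_X - fps_const c * fps_X ^ (s + 1)) = H - fps_X * H - fps_const c * (fps_X ^ (s+1) * H)"
    by (simp add: right_diff_distrib mult.assoc mult.commute mult.left_commute)
  show "genH s b a * (1 - fps_X - fps_const (of_nat b * [:0, 1:]) * fps_X ^ (s + 1))
           = 1 + fps_const (of_nat b * [:0, 1:]) * (\<Sum>i=1..s. fps_X ^ i)"
    unfolding c_def[symmetric] H_def[symmetric] e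
  proof (rule fps_ext)
    fix n
    have sumX: "(\<Sum>i=1..s. fps_X ^ i :: int poly fps) $ n = (if 1 \<le> n \<and> n \<le> s then 1 else 0)"
      by (simp add: fps_sum_nth)
    have lhs: "(H - fps_X * H - fps_const c * (fps_X ^ (s + 1) * H)) $ n =
       H $ n - (if n = 0 then 0 else H $ (n-1)) - c * (if n < s+1 then 0 else H $ (n-(s+1)))"
      unfolding fps_sub_nth fps_mult_left_const_nth fps_X_mult_nth fps_X_power_mult_nth ..
    have rhs: "(1 + fps_const c * (\<Sum>i=1..s. fps_X ^ i)) $ n =
       (if n = 0 then 1 else 0) + c * (if 1 \<le> n \<and> n \<le> s then 1 else 0)"
      unfolding fps_add_nth fps_one_nth fps_mult_left_const_nth sumX ..
    have main: "H $ n - (if n = 0 then 0 else H $ (n-1)) - c * (if n < s+1 then 0 else H $ (n-(s+1))) =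
       (if n = 0 then 1 else 0) + c * (if 1 \<le> n \<and> n \<le> s then 1 else 0)"
    proof (cases "n = 0")
      case True then show ?thesis using H0[OF b1 gen] unfolding H_def by simp
    next
      case False
      then have n1: "n \<ge> 1" by simp
      have r: "H $ n = H $ (n-1) + c * H $ (n-1-s)" using Hrec[OF b1 gen n1] unfolding H_def c_def .
      show ?thesis
      proof (cases "n \<le> s")
        case True
        then have "n - 1 - s = 0" by simp
        then show ?thesis using r H0[OF b1 gen] True False unfolding H_def by simp
      next
        case False
        then have "n - (s+1) = n - 1 - s" by simp
        then show ?thesis using r False \<open>n \<noteq> 0\<close> by simp
      qed
    qed
    show "(H - fps_X * H - fps_const c * (fps_X ^ (s + 1) * H)) $ n =
          (1 + fps_const c * (\<Sum>i=1..s. fps_X ^ i)) $ n"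
      unfolding lhs rhs by (rule main)
  qed
qed


end
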